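(* Let $\Gamma$ be a connected directed graph of bounded degree and let $\nu$ be a quasi-cocycle on $\Gamma$ with constants $\Delta>0$, $\eta>0$. Suppose that for every arrow of $\Gamma$ starting at a vertex $v$ and ending at a vertex $u$ we have $\nu(v,u)>2\eta$. Then every (finite or infinite) directed path in $\Gamma$ is a $((\Delta+\eta)/\eta,1)$-quasi-geodesic.
   Context: Distances between vertices of a connected graph are combinatorial (the least number of edges in a connecting path). A function $\nu$ on pairs of vertices of a bounded degree graph $\Gamma$ is a quasi-cocycle with constants $\Delta>0$, $\eta>0$ if $|\nu(v_1,v_2)|\le\Delta$ for all adjacent vertices $v_1,v_2$ and $\nu(v_1,v_2)+\nu(v_2,v_3)-\eta\le\nu(v_1,v_3)\le\nu(v_1,v_2)+\nu(v_2,v_3)+\eta$ for all vertices $v_1,v_2,v_3$. A sequence of points $t_0,t_1,\ldots$ (finite or infinite) of a metric space is a $(\Lambda,\Delta')$-quasi-geodesic if $|t_i-t_{i+1}|\le\Delta'$ and $|i-j|\le\Lambda\cdot|t_i-t_j|$ for all indices $i,j$. A directed path is a sequence of vertices $x_1,x_2,\ldots$ such that each $(x_i,x_{i+1})$ is an arrow. *)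

theory Defs
  imports Complex_Main "HOL-Library.Extended_Nat"
begin

definition adj :: "('a \<times> 'a) set \<Rightarrow> 'a \<Rightarrow> 'a \<Rightarrow> bool" where
  "adj E u v \<longleftrightarrow> (u, v) \<in> E \<or> (v, u) \<in> E"

definition upath :: "('a \<times> 'a) set \<Rightarrow> (nat \<Rightarrow> 'a) \<Rightarrow> nat \<Rightarrow> 'a \<Rightarrow> 'a \<Rightarrow> bool" where
  "upath E p n u v \<longleftrightarrow> p 0 = u \<and> p n = v \<and> (\<forall>i<n. adj E (p i) (p (Suc i)))"

definition digraph :: "'a set \<Rightarrow> ('a \<times> 'a) set \<Rightarrow> bool" where
  "digraph V E \<longleftrightarrow> E \<subseteq> V \<times> V"

definition connected_graph :: "'a set \<Rightarrow> ('a \<times> 'a) set \<Rightarrow> bool" where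
  "connected_graph V E \<longleftrightarrow> V \<noteq> {} \<and> (\<forall>u\<in>V. \<forall>v\<in>V. \<exists>p n. upath E p n u v)"

definition bounded_degree :: "'a set \<Rightarrow> ('a \<times> 'a) set \<Rightarrow> bool" where
  "bounded_degree V E \<longleftrightarrow> (\<exists>D::nat. \<forall>v\<in>V. finite {u. adj E v u} \<and> card {u. adj E v u} \<le> D)"

definition gdist :: "('a \<times> 'a) set \<Rightarrow> 'a \<Rightarrow> 'a \<Rightarrow> nat" where
  "gdist E u v = (LEAST n. \<exists>p. upath E p n u v)"

definition quasi_cocycle ::
  "'a set \<Rightarrow> ('a \<times> 'a) set \<Rightarrow> ('a \<Rightarrow> 'a \<Rightarrow> real) \<Rightarrow> real \<Rightarrow> real \<Rightarrow> bool" where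
  "quasi_cocycle V E \<nu> \<Delta> \<eta> \<longleftrightarrow>
     (\<forall>v1\<in>V. \<forall>v2\<in>V. adj E v1 v2 \<longrightarrow> \<bar>\<nu> v1 v2\<bar> \<le> \<Delta>) \<and>
     (\<forall>v1\<in>V. \<forall>v2\<in>V. \<forall>v3\<in>V.
        \<nu> v1 v2 + \<nu> v2 v3 - \<eta> \<le> \<nu> v1 v3 \<and> \<nu> v1 v3 \<le> \<nu> v1 v2 + \<nu> v2 v3 + \<eta>)"

text \<open>A (finite or infinite) sequence is a map x :: nat \<Rightarrow> 'a together with a
  length N :: enat; its indices are the i with i < N (N = \<infinity> for infinite sequences).\<close>

definition directed_path :: "'a set \<Rightarrow> ('a \<times> 'a) set \<Rightarrow> (nat \<Rightarrow> 'a) \<Rightarrow> enat \<Rightarrow> bool" where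
  "directed_path V E x N \<longleftrightarrow> (\<forall>i. enat i < N \<longrightarrow> x i \<in> V) \<and>
     (\<forall>i. enat (Suc i) < N \<longrightarrow> (x i, x (Suc i)) \<in> E)"

definition quasi_geodesic ::
  "('a \<times> 'a) set \<Rightarrow> real \<Rightarrow> real \<Rightarrow> (nat \<Rightarrow> 'a) \<Rightarrow> enat \<Rightarrow> bool" where
  "quasi_geodesic E \<Lambda> \<Delta>' x N \<longleftrightarrow>
     (\<forall>i. enat (Suc i) < N \<longrightarrow> real (gdist E (x i) (x (Suc i))) \<le> \<Delta>') \<and>
     (\<forall>i j. enat i < N \<longrightarrow> enat j < N \<longrightarrow>
        \<bar>real i - real j\<bar> \<le> \<Lambda> * real (gdist E (x i) (x j)))"

end

theory Submission
  imports Defs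
begin

lemma adj_sym: "adj E u v \<Longrightarrow> adj E v u" by (auto simp: adj_def)

lemma upath_rev: "upath E p n u v \<Longrightarrow> upath E (\<lambda>k. p (n - k)) n v u"
  unfolding upath_def
proof (intro conjI allI impI; (elim conjE)?)
  fix i assume h: "\<forall>i<n. adj E (p i) (p (Suc i))" and i: "i < n"
  have "adj E (p (n - Suc i)) (p (Suc (n - Suc i)))" using h i by auto
  moreover have "Suc (n - Suc i) = n - i" using i by auto
  ultimately show "adj E (p (n - i)) (p (n - Suc i))" by (metis adj_sym)
qed auto

lemma path_in_V:
  assumes "E \<subseteq> V \<times> V" "\<forall>i<n. adj E (p i) (p (Suc i))" "i \<le> n" "1 \<le> n"
  shows "p i \<in> V"
proof (cases "i < n")
  case True then show ?thesis using assms by (auto simp: adj_def)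
next
  case False
  then have "i = Suc (n - 1)" using assms by auto
  moreover have "n - 1 < n" using assms by simp
  then have "adj E (p (n-1)) (p (Suc (n-1)))" using assms(2) by blast
  ultimately show ?thesis using assms by (auto simp: adj_def)
qed

lemma up_bound:
  assumes E: "E \<subseteq> V \<times> V" and qc: "quasi_cocycle V E \<nu> \<Delta> \<eta>"
    and h: "\<forall>i<n. adj E (p i) (p (Suc i))"
  shows "1 \<le> m \<Longrightarrow> m \<le> n \<Longrightarrow> \<nu> (p 0) (p m) \<le> m*\<Delta> + (real m - 1)*\<eta>"
proof (induction m)
  case 0 then show ?case by simp
next
  case (Suc m)
  have V: "\<And>i. i \<le> n \<Longrightarrow> p i \<in> V" using path_in_V[OF E h] Suc by auto
  have a: "adj E (p m) (p (Suc m))" using h Suc by auto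
  then have b: "\<nu> (p m) (p (Suc m)) \<le> \<Delta>" using qc V Suc unfolding quasi_cocycle_def
    by (metis Suc_leD abs_le_D1 order_refl)
  show ?case
  proof (cases "m = 0")
    case True then show ?thesis using b by simp
  next
    case False
    then have ih: "\<nu> (p 0) (p m) \<le> m*\<Delta> + (real m - 1)*\<eta>" using Suc by auto
    have "\<nu> (p 0) (p (Suc m)) \<le> \<nu> (p 0) (p m) + \<nu> (p m) (p (Suc m)) + \<eta>"
      using qc V Suc unfolding quasi_cocycle_def by (meson Suc_leD le0)
    then show ?thesis using ih b by (simp add: algebra_simps)
  qed
qed

lemma low_bound:
  assumes qc: "quasi_cocycle V E \<nu> \<Delta> \<eta>"
    and pos: "\<And>v u. (v, u) \<in> E \<Longrightarrow> \<nu> v u > 2 * \<eta>"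
    and dp: "directed_path V E x N"
  shows "1 \<le> k \<Longrightarrow> enat (i + k) < N \<Longrightarrow> \<nu> (x i) (x (i + k)) \<ge> (real k + 1) * \<eta>"
proof (induction k)
  case 0 then show ?case by simp
next
  case (Suc k)
  have V: "\<And>m. m \<le> i + Suc k \<Longrightarrow> x m \<in> V" using dp Suc unfolding directed_path_def
    by (meson enat_ord_simps(1) le_less_trans)
  have e: "(x (i+k), x (Suc (i+k))) \<in> E" using dp Suc unfolding directed_path_def by auto
  then have b: "\<nu> (x (i+k)) (x (i + Suc k)) > 2*\<eta>" using pos by auto
  show ?case
  proof (cases "k = 0")
    case True then show ?thesis using b by simp
  next
    case False
    have "enat (i + k) < N" using Suc by (meson add_le_mono enat_ord_simps(1) le_less_trans le_refl le_Suc_eq)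
    then have ih: "\<nu> (x i) (x (i+k)) \<ge> (real k + 1)*\<eta>" using Suc False by auto
    have "\<nu> (x i) (x (i + Suc k)) \<ge> \<nu> (x i) (x (i+k)) + \<nu> (x (i+k)) (x (i + Suc k)) - \<eta>"
      using qc V unfolding quasi_cocycle_def by (meson le_add1 le_add2 add_le_mono le_Suc_eq le_refl)
    then show ?thesis using ih b by (simp add: algebra_simps)
  qed
qed

lemma self_bound:
  assumes qc: "quasi_cocycle V E \<nu> \<Delta> \<eta>" and "v \<in> V" shows "\<nu> v v \<le> \<eta>"
  using assms unfolding quasi_cocycle_def by force

theorem lemma1p2p14:
  fixes V :: "'a set" and E :: "('a \<times> 'a) set" and \<nu> :: "'a \<Rightarrow> 'a \<Rightarrow> real"
    and \<Delta> \<eta> :: real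
  assumes "digraph V E"
    and "connected_graph V E"
    and "bounded_degree V E"
    and "\<Delta> > 0" and "\<eta> > 0"
    and "quasi_cocycle V E \<nu> \<Delta> \<eta>"
    and "\<And>v u. (v, u) \<in> E \<Longrightarrow> \<nu> v u > 2 * \<eta>"
  shows "\<forall>x N. directed_path V E x N \<longrightarrow> quasi_geodesic E ((\<Delta> + \<eta>) / \<eta>) 1 x N"
proof (intro allI impI)
  fix x N assume dp: "directed_path V E x N"
  have E: "E \<subseteq> V \<times> V" using assms(1) by (simp add: digraph_def)
  have qc: "quasi_cocycle V E \<nu> \<Delta> \<eta>" by fact
  have xV: "\<And>i. enat i < N \<Longrightarrow> x i \<in> V" using dp by (simp add: directed_path_def)
  have key: "real k * \<eta> \<le> real d * (\<Delta> + \<eta>)"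
    if ik: "enat (i + k) < N" and up: "upath E p d (x i) (x (i+k)) \<or> upath E p d (x (i+k)) (x i)"
    for i k d p
  proof (cases "k = 0")
    case True then show ?thesis using assms(4,5) by simp
  next
    case False
    have lo: "\<nu> (x i) (x (i + k)) \<ge> (real k + 1) * \<eta>"
      using low_bound[OF qc assms(7) dp, of k i] False ik by auto
    obtain q where q: "upath E q d (x i) (x (i+k))"
    proof (cases "upath E p d (x i) (x (i+k))")
      case True then show ?thesis using that by blast
    next
      case False then have "upath E p d (x (i+k)) (x i)" using up by blast
      from upath_rev[OF this] show ?thesis using that by blast
    qed
    show ?thesis
    proof (cases "d = 0")
      case True
      then have "x i = x (i+k)" using q by (auto simp add: upath_def)
      moreover have "x i \<in> V" using xV ik by (meson enat_ord_simps(1) le_add1 le_less_trans)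
      ultimately have "\<nu> (x i) (x (i+k)) \<le> \<eta>" using self_bound[OF qc] by simp
      then have "real k * \<eta> \<le> 0" using lo by (simp add: algebra_simps)
      then show ?thesis using False assms(5) by (simp add: mult_le_0_iff)
    next
      case False
      have "\<nu> (q 0) (q d) \<le> d*\<Delta> + (real d - 1)*\<eta>"
        using up_bound[OF E qc, of d q d] q False by (simp add: upath_def)
      then have "\<nu> (x i) (x (i+k)) \<le> d*\<Delta> + (real d - 1)*\<eta>" using q by (simp add: upath_def)
      then show ?thesis using lo assms(5) by (simp add: algebra_simps)
    qed
  qed
  have ex: "\<exists>p n. upath E p n (x i) (x j)" if "enat i < N" "enat j < N" for i j
    using assms(2) xV that unfolding connected_graph_def by blast
  have gd: "upath E (SOME p. upath E p (gdist E (x i) (x j)) (x i) (x j)) (gdist E (x i) (x j)) (x i) (x j)"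
    if ij0: "enat i < N" "enat j < N" for i j
  proof -
    have "\<exists>p. upath E p (gdist E (x i) (x j)) (x i) (x j)"
    proof -
      obtain p0 n0 where "upath E p0 n0 (x i) (x j)" using ex[OF ij0] by blast
      then have "\<exists>p. upath E p n0 (x i) (x j)" by blast
      then show ?thesis unfolding gdist_def
        by (rule LeastI[where P="\<lambda>n. \<exists>p. upath E p n (x i) (x j)"])
    qed
    then show ?thesis by (rule someI_ex)
  qed
  show "quasi_geodesic E ((\<Delta> + \<eta>) / \<eta>) 1 x N"
    unfolding quasi_geodesic_def
  proof (intro conjI allI impI)
    fix i assume "enat (Suc i) < N"
    then have "(x i, x (Suc i)) \<in> E" using dp by (simp add: directed_path_def)
    then have "upath E (\<lambda>k. if k = 0 then x i else x (Suc i)) 1 (x i) (x (Suc i))"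
      by (simp add: upath_def adj_def)
    then have "\<exists>p. upath E p 1 (x i) (x (Suc i))" by blast
    then have "gdist E (x i) (x (Suc i)) \<le> 1" unfolding gdist_def
      by (rule Least_le[where P="\<lambda>n. \<exists>p. upath E p n (x i) (x (Suc i))"])
    then show "real (gdist E (x i) (x (Suc i))) \<le> 1" by simp
  next
    fix i j assume ij: "enat i < N" "enat j < N"
    let ?d = "gdist E (x i) (x j)"
    obtain pp where g: "upath E pp ?d (x i) (x j)" using gd[OF ij] by blast
    have "real (if i \<le> j then j - i else i - j) * \<eta> \<le> real ?d * (\<Delta> + \<eta>)"
    proof (cases "i \<le> j")
      case True
      then have "j = i + (j - i)" by simp
      then show ?thesis using key[where i=i and k="j - i" and d="?d" and p=pp] g ij True by (metis (full_types))
    next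
      case False
      then have "i = j + (i - j)" by simp
      then show ?thesis using key[where i=j and k="i - j" and d="?d" and p=pp] g ij False by (metis (full_types))
    qed
    moreover have "\<bar>real i - real j\<bar> = real (if i \<le> j then j - i else i - j)" by auto
    ultimately have "\<bar>real i - real j\<bar> * \<eta> \<le> real ?d * (\<Delta> + \<eta>)" by simp
    then show "\<bar>real i - real j\<bar> \<le> (\<Delta> + \<eta>) / \<eta> * real ?d"
      using assms(5) by (simp add: field_simps)
  qed
qed

end
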